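(* For all $k,m\in\mathbb{N}$ with $k<m$, the metric space $([\mathbb{N}]^k,d^{(k)}_{\mathrm{I}})$ embeds isometrically into $([\mathbb{N}]^m,d^{(m)}_{\mathrm{I}})$.
   Context: For $k\in\mathbb{N}$, $[\mathbb{N}]^k$ is the set of subsets of $\mathbb{N}$ of cardinality $k$, written $\{a_1<\dots<a_k\}$. Kalton's interlacing graph on $[\mathbb{N}]^k$: $A=\{a_1<\dots<a_k\}\ne B=\{b_1<\dots<b_k\}$ are adjacent iff either $a_i\le b_i\le a_{i+1}$ for $1\le i<k$ and $a_k\le b_k$, or $b_i\le a_i\le b_{i+1}$ for $1\le i<k$ and $b_k\le a_k$. $d^{(k)}_{\mathrm{I}}$ is its shortest-path metric. *)

theory Defs
  imports Main "HOL-Library.Extended_Nat"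
begin

definition ksets :: "nat \<Rightarrow> nat set set" where
  "ksets k = {A. finite A \<and> card A = k}"

definition elt :: "nat set \<Rightarrow> nat \<Rightarrow> nat" where
  "elt A i = sorted_list_of_set A ! i"

text \<open>One-sided interlacing: a_i \<le> b_i \<le> a_{i+1} for 1 \<le> i < k and a_k \<le> b_k
  (here with 0-based indices).\<close>
definition interlaces :: "nat \<Rightarrow> nat set \<Rightarrow> nat set \<Rightarrow> bool" where
  "interlaces k A B \<longleftrightarrow>
     (\<forall>i. i + 1 < k \<longrightarrow> elt A i \<le> elt B i \<and> elt B i \<le> elt A (i + 1)) \<and>
     (0 < k \<longrightarrow> elt A (k - 1) \<le> elt B (k - 1))"

definition interlacing_adj :: "nat \<Rightarrow> nat set \<Rightarrow> nat set \<Rightarrow> bool" where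
  "interlacing_adj k A B \<longleftrightarrow>
     A \<in> ksets k \<and> B \<in> ksets k \<and> A \<noteq> B \<and> (interlaces k A B \<or> interlaces k B A)"

text \<open>Shortest-path metric (value \<infinity> if no path exists).\<close>
definition dI :: "nat \<Rightarrow> nat set \<Rightarrow> nat set \<Rightarrow> enat" where
  "dI k A B = (INF n \<in> {n. (interlacing_adj k ^^ n) A B}. enat n)"

end

theory Submission
  imports Defs
begin

lemma sls_set: "sorted_wrt (<) (xs::nat list) \<Longrightarrow> sorted_list_of_set (set xs) = xs"
  by (metis List.finite_set set_sorted_list_of_set strict_sorted_equal strict_sorted_list_of_set)

lemma strict_nth_ge: "sorted_wrt (<) (xs::nat list) \<Longrightarrow> i < length xs \<Longrightarrow> i \<le> xs ! i"
proof (induction i)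
  case 0 then show ?case by simp
next
  case (Suc i)
  then have "xs ! i < xs ! Suc i" by (simp add: sorted_wrt_nth_less)
  with Suc show ?case by simp
qed

lemma relpow_map:
  assumes step: "\<And>A B. interlacing_adj p A B \<Longrightarrow> h A = h B \<or> interlacing_adj q (h A) (h B)"
  shows "(interlacing_adj p ^^ n) A B \<Longrightarrow> \<exists>n'\<le>n. (interlacing_adj q ^^ n') (h A) (h B)"
proof (induction n arbitrary: B)
  case 0 then show ?case by auto
next
  case (Suc n)
  from Suc.prems obtain C where "(interlacing_adj p ^^ n) A C" "interlacing_adj p C B"
    by (rule relpowp_Suc_E)
  with Suc.IH obtain n' where n': "n' \<le> n" "(interlacing_adj q ^^ n') (h A) (h C)" by blast
  from step[OF \<open>interlacing_adj p C B\<close>] show ?case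
  proof
    assume "h C = h B" with n' show ?thesis by (metis le_SucI)
  next
    assume "interlacing_adj q (h C) (h B)"
    with n'(2) have "(interlacing_adj q ^^ Suc n') (h A) (h B)" by (rule relpowp_Suc_I)
    with n' show ?thesis by (metis Suc_le_mono)
  qed
qed

lemma dI_map:
  assumes step: "\<And>A B. interlacing_adj p A B \<Longrightarrow> h A = h B \<or> interlacing_adj q (h A) (h B)"
  shows "dI q (h A) (h B) \<le> dI p A B"
  unfolding dI_def
proof (rule INF_greatest)
  fix n assume "n \<in> {n. (interlacing_adj p ^^ n) A B}"
  then obtain n' where "n' \<le> n" "(interlacing_adj q ^^ n') (h A) (h B)"
    using relpow_map[of p h q, OF step] by blast
  then have "(INF n \<in> {n. (interlacing_adj q ^^ n) (h A) (h B)}. enat n) \<le> enat n'"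
    by (intro INF_lower) auto
  also have "\<dots> \<le> enat n" using \<open>n' \<le> n\<close> by simp
  finally show "(INF n \<in> {n. (interlacing_adj q ^^ n) (h A) (h B)}. enat n) \<le> enat n" .
qed

theorem corollary5p2:
  fixes k m :: nat
  assumes "k < m"
  shows "\<exists>f :: nat set \<Rightarrow> nat set.
           (\<forall>A \<in> ksets k. f A \<in> ksets m) \<and>
           (\<forall>A \<in> ksets k. \<forall>B \<in> ksets k. dI m (f A) (f B) = dI k A B)"
proof -
  define j where "j = m - k"
  define L where "L = (\<lambda>A. sorted_list_of_set (A::nat set))"
  define fl where "fl = (\<lambda>A. [0..<j] @ map (\<lambda>x. x + j) (L A))"
  define f where "f = (\<lambda>A. set (fl A))"
  define gl where "gl = (\<lambda>C. map (\<lambda>x. x - j) (drop j (L C)))"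
  define g where "g = (\<lambda>C. set (gl C))"
  have Lss: "sorted_wrt (<) (L A)" for A unfolding L_def by simp
  have Llen: "finite A \<Longrightarrow> length (L A) = card A" for A unfolding L_def by simp
  have flss: "sorted_wrt (<) (fl A)" for A
    using Lss[of A] by (auto simp: fl_def sorted_wrt_append sorted_wrt_map)
  have Lf: "L (f A) = fl A" for A unfolding f_def L_def using flss by (simp add: sls_set)
  have glss: "sorted_wrt (<) (gl C)" if "finite C" for C
  proof -
    have ge: "\<forall>x\<in>set (drop j (L C)). j \<le> x"
    proof
      fix x assume "x \<in> set (drop j (L C))"
      then obtain i where i: "i < length (drop j (L C))" "x = drop j (L C) ! i"
        by (metis in_set_conv_nth)
      then have "j + i \<le> L C ! (j + i)" using strict_nth_ge[OF Lss, of "j+i" C] by simp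
      with i show "j \<le> x" by simp
    qed
    have "sorted_wrt (<) (drop j (L C))" using Lss[of C] by (simp add: sorted_wrt_drop)
    with ge show ?thesis unfolding gl_def sorted_wrt_map
      by (metis (no_types, lifting) diff_less_mono sorted_wrt_mono_rel)
  qed
  have Lg: "finite C \<Longrightarrow> L (g C) = gl C" for C unfolding g_def L_def using glss by (simp add: sls_set)
  have fin: "finite A \<Longrightarrow> finite (f A)" "finite (g A)" for A by (simp_all add: f_def g_def)
  have cardf: "A \<in> ksets k \<Longrightarrow> f A \<in> ksets m" for A
  proof -
    assume "A \<in> ksets k"
    then have "finite A" "card A = k" by (auto simp: ksets_def)
    have "card (f A) = length (fl A)"
      using Llen[OF fin(1)[OF \<open>finite A\<close>]] Lf by simp
    then show ?thesis using Llen[OF \<open>finite A\<close>] \<open>card A = k\<close> assms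
      by (simp add: ksets_def fl_def f_def j_def)
  qed
  have gf: "A \<in> ksets k \<Longrightarrow> g (f A) = A" for A
  proof -
    assume "A \<in> ksets k"
    then have "finite A" by (auto simp: ksets_def)
    have "gl (f A) = L A" unfolding gl_def Lf by (simp add: fl_def comp_def)
    then show ?thesis unfolding g_def using \<open>finite A\<close> by (simp add: L_def)
  qed
  have eltf: "elt (f A) i = (if i < j then i else elt A (i - j) + j)"
    if "A \<in> ksets k" "i < m" for A i
  proof -
    have "length (L A) = k" using that Llen by (auto simp: ksets_def)
    then show ?thesis using that assms
      by (auto simp: elt_def Lf[unfolded L_def] fl_def nth_append L_def j_def)
  qed
  have eltg: "elt (g C) i = elt C (i + j) - j" if "C \<in> ksets m" "i < k" for C i
  proof -
    have "finite C" "length (L C) = m" using that Llen by (auto simp: ksets_def)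
    then show ?thesis using that assms Lg
      by (auto simp: elt_def gl_def L_def j_def add.commute)
  qed
  have cardg: "C \<in> ksets m \<Longrightarrow> g C \<in> ksets k" for C
  proof -
    assume "C \<in> ksets m"
    then have "finite C" "length (L C) = m" using Llen by (auto simp: ksets_def)
    then have "card (g C) = length (gl C)"
      using Llen[OF fin(2)] Lg by metis
    then show ?thesis using \<open>length (L C) = m\<close> assms
      by (simp add: ksets_def gl_def g_def j_def)
  qed
  have intf: "interlaces m (f A) (f B)" if "A \<in> ksets k" "B \<in> ksets k" "interlaces k A B" "0 < k" for A B
    unfolding interlaces_def
  proof (rule conjI; intro allI impI)
    fix i assume i: "i + 1 < m"
    show "elt (f A) i \<le> elt (f B) i \<and> elt (f B) i \<le> elt (f A) (i + 1)"
    proof (cases "i + 1 < j")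
      case True then show ?thesis using i that by (simp add: eltf)
    next
      case False
      show ?thesis
      proof (cases "i + 1 = j")
        case True then show ?thesis using i that by (simp add: eltf)
      next
        case False
        then have "i - j + 1 < k" "i \<ge> j" using \<open>\<not> i + 1 < j\<close> i assms j_def by auto
        then have "elt A (i-j) \<le> elt B (i-j) \<and> elt B (i-j) \<le> elt A (i - j + 1)"
          using that(3) unfolding interlaces_def by blast
        moreover have "i + 1 - j = i - j + 1" using \<open>i \<ge> j\<close> by simp
        ultimately show ?thesis using i that \<open>i \<ge> j\<close> by (simp add: eltf)
      qed
    qed
  next
    assume "0 < m"
    have "m - 1 \<ge> j" "m - 1 - j = k - 1" using that(4) assms j_def by auto
    moreover have "elt A (k - 1) \<le> elt B (k - 1)" using that(3,4) unfolding interlaces_def by blast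
    ultimately show "elt (f A) (m - 1) \<le> elt (f B) (m - 1)" using that assms
      by (simp add: eltf)
  qed
  have intg: "interlaces k (g C) (g D)" if "C \<in> ksets m" "D \<in> ksets m" "interlaces m C D" for C D
    unfolding interlaces_def
  proof (rule conjI; intro allI impI)
    fix i assume i: "i + 1 < k"
    then have "i + j + 1 < m" using assms j_def by auto
    then have "elt C (i+j) \<le> elt D (i+j) \<and> elt D (i+j) \<le> elt C (i + j + 1)"
      using that(3) unfolding interlaces_def by blast
    moreover have "i + 1 + j = i + j + 1" by simp
    ultimately show "elt (g C) i \<le> elt (g D) i \<and> elt (g D) i \<le> elt (g C) (i + 1)"
      using i that by (simp add: eltg diff_le_mono)
  next
    assume "0 < k"
    have "k - 1 + j = m - 1" using \<open>0 < k\<close> assms j_def by auto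
    moreover have "elt C (m - 1) \<le> elt D (m - 1)" using that(3) assms unfolding interlaces_def by auto
    ultimately show "elt (g C) (k - 1) \<le> elt (g D) (k - 1)" using that \<open>0 < k\<close>
      by (simp add: eltg diff_le_mono)
  qed
  have stepf: "interlacing_adj m (f A) (f B)" if "interlacing_adj k A B" for A B
  proof -
    have A: "A \<in> ksets k" "B \<in> ksets k" "A \<noteq> B" using that by (auto simp: interlacing_adj_def)
    have "0 < k"
    proof (rule ccontr)
      assume "\<not> 0 < k" then have "A = {}" "B = {}" using A by (auto simp: ksets_def)
      with A show False by simp
    qed
    have "f A \<noteq> f B" using gf A by metis
    then show ?thesis using that A intf cardf \<open>0 < k\<close> by (auto simp: interlacing_adj_def)
  qed
  have stepg: "g C = g D \<or> interlacing_adj k (g C) (g D)" if "interlacing_adj m C D" for C D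
    using that intg cardg by (auto simp: interlacing_adj_def)
  show ?thesis
  proof (intro exI[of _ f] conjI ballI)
    fix A assume "A \<in> ksets k" then show "f A \<in> ksets m" by (rule cardf)
  next
    fix A B assume AB: "A \<in> ksets k" "B \<in> ksets k"
    have "dI k (g (f A)) (g (f B)) \<le> dI m (f A) (f B)" by (rule dI_map[OF stepg])
    then have "dI k A B \<le> dI m (f A) (f B)" using gf AB by simp
    moreover have "dI m (f A) (f B) \<le> dI k A B" by (rule dI_map) (simp add: stepf)
    ultimately show "dI m (f A) (f B) = dI k A B" by simp
  qed
qed
end
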